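(* For any three continuous functions $f_1,f_2,f_3:\mathrm{SO}(4)\to S^3\times S^3$, there exists a rotation $R\in\mathrm{SO}(4)$ such that $d_4(R,\mathbf{R}_{QQ}(f_i(R)))\ge\pi$ for all $i\in\{1,2,3\}$.
   Context: Identify $\mathbb{R}^4$ with the quaternions via $(w,x,y,z)\leftrightarrow w+x\mathbf{i}+y\mathbf{j}+z\mathbf{k}$; $S^3$ is the set of unit quaternions. For $(\mathbf{q}_L,\mathbf{q}_R)\in S^3\times S^3$, $\mathbf{R}_{QQ}(\mathbf{q}_L,\mathbf{q}_R)\in\mathrm{SO}(4)$ is the rotation $\mathbf{p}\mapsto\mathbf{q}_L\mathbf{p}\mathbf{q}_R$; every element of $\mathrm{SO}(4)$ is of this form, and $(\mathbf{q}_L,\mathbf{q}_R)$ is determined up to replacing it by $(-\mathbf{q}_L,-\mathbf{q}_R)$. For unit quaternions let $d_Q(\mathbf{p},\mathbf{q})=\cos^{-1}(\mathbf{p}\cdot\mathbf{q})$ (Euclidean dot product in $\mathbb{R}^4$). The distance between $R_1=\mathbf{R}_{QQ}(\mathbf{p}_L,\mathbf{p}_R)$ and $R_2=\mathbf{R}_{QQ}(\mathbf{q}_L,\mathbf{q}_R)$ is $d_4(R_1,R_2)=\min\{a+b,2\pi-a-b\}+|a-b|$ where $a=d_Q(\mathbf{p}_L,\mathbf{q}_L)$, $b=d_Q(\mathbf{p}_R,\mathbf{q}_R)$; this is independent of the choice of representatives and equals $|\theta|+|\phi|$ where $e^{\pm i\theta},e^{\pm i\phi}$ are the eigenvalues of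 $R_2R_1^{-1}$ with $\theta\in[0,\pi]$, $|\theta|\ge|\phi|$. *)

theory Defs
  imports "HOL-Analysis.Analysis"
begin

text \<open>R^4 identified with the quaternions: (w,x,y,z) = w + x i + y j + z k,
  stored as components 1,2,3,4 of a vector in real^4.\<close>

definition qmult :: "real^4 \<Rightarrow> real^4 \<Rightarrow> real^4" where
  "qmult p q = vector
     [p$1*q$1 - p$2*q$2 - p$3*q$3 - p$4*q$4,
      p$1*q$2 + p$2*q$1 + p$3*q$4 - p$4*q$3,
      p$1*q$3 - p$2*q$4 + p$3*q$1 + p$4*q$2,
      p$1*q$4 + p$2*q$3 - p$3*q$2 + p$4*q$1]"

definition S3 :: "(real^4) set" where
  "S3 = sphere 0 1"

definition SO4 :: "(real^4^4) set" where
  "SO4 = {A. rotation_matrix A}"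

definition RQQ :: "(real^4) \<times> (real^4) \<Rightarrow> real^4^4" where
  "RQQ q = matrix (\<lambda>p. qmult (qmult (fst q) p) (snd q))"

definition dQ :: "real^4 \<Rightarrow> real^4 \<Rightarrow> real" where
  "dQ p q = arccos (p \<bullet> q)"

definition d4q :: "(real^4) \<times> (real^4) \<Rightarrow> (real^4) \<times> (real^4) \<Rightarrow> real" where
  "d4q p q = (let a = dQ (fst p) (fst q); b = dQ (snd p) (snd q)
              in min (a + b) (2*pi - a - b) + \<bar>a - b\<bar>)"

text \<open>Distance on SO(4), computed from (arbitrarily chosen) representatives;
  by the context it does not depend on the choice.\<close>
definition d4 :: "real^4^4 \<Rightarrow> real^4^4 \<Rightarrow> real" where
  "d4 R1 R2 = d4q (SOME p. p \<in> S3 \<times> S3 \<and> RQQ p = R1)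
                  (SOME q. q \<in> S3 \<times> S3 \<and> RQQ q = R2)"

end

theory Submission
  imports Defs "HOL-Homology.Homology"
begin

lemma vector4 [simp]:
 "(vector [a,b,c,d] ::real^4)$1 = a"
 "(vector [a,b,c,d] ::real^4)$2 = b"
 "(vector [a,b,c,d] ::real^4)$3 = c"
 "(vector [a,b,c,d] ::real^4)$4 = d"
  unfolding vector_def by simp_all

lemma qmult_comp [simp]:
  "qmult p q $ 1 = p$1*q$1 - p$2*q$2 - p$3*q$3 - p$4*q$4"
  "qmult p q $ 2 = p$1*q$2 + p$2*q$1 + p$3*q$4 - p$4*q$3"
  "qmult p q $ 3 = p$1*q$3 - p$2*q$4 + p$3*q$1 + p$4*q$2"
  "qmult p q $ 4 = p$1*q$4 + p$2*q$3 - p$3*q$2 + p$4*q$1"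
  by (simp_all add: qmult_def)

lemma norm4: "norm (x::real^4) = sqrt (x$1^2 + x$2^2 + x$3^2 + x$4^2)"
  by (simp add: norm_eq_sqrt_inner inner_vec_def sum_4 power2_eq_square)

lemma inner4: "(x::real^4) \<bullet> y = x$1*y$1 + x$2*y$2 + x$3*y$3 + x$4*y$4"
  by (simp add: inner_vec_def sum_4)

lemma norm_qmult: "norm (qmult a b) = norm a * norm b"
proof -
  have "(qmult a b $1)^2 + (qmult a b $2)^2 + (qmult a b $3)^2 + (qmult a b $4)^2
     = (a$1^2 + a$2^2 + a$3^2 + a$4^2) * (b$1^2 + b$2^2 + b$3^2 + b$4^2)"
    by (simp add: power2_eq_square algebra_simps)
  then show ?thesis by (simp add: norm4 real_sqrt_mult)
qed

lemma linear_qq: "linear (\<lambda>x. qmult (qmult a x) b)"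
  by (rule linearI) (simp_all add: vec_eq_iff forall_4 algebra_simps)

lemma RQQ_entry: "RQQ (a,b) $ i $ j = qmult (qmult a (axis j 1)) b $ i"
  by (simp add: RQQ_def matrix_def)

lemma axis4 [simp]: "axis (1::4) (1::real) $ 1 = 1" "axis (1::4) (1::real) $ 2 = 0"
  "axis (1::4) (1::real) $ 3 = 0" "axis (1::4) (1::real) $ 4 = 0"
  "axis (2::4) (1::real) $ 1 = 0" "axis (2::4) (1::real) $ 2 = 1"
  "axis (2::4) (1::real) $ 3 = 0" "axis (2::4) (1::real) $ 4 = 0"
  "axis (3::4) (1::real) $ 1 = 0" "axis (3::4) (1::real) $ 2 = 0"
  "axis (3::4) (1::real) $ 3 = 1" "axis (3::4) (1::real) $ 4 = 0"
  "axis (4::4) (1::real) $ 1 = 0" "axis (4::4) (1::real) $ 2 = 0"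
  "axis (4::4) (1::real) $ 3 = 0" "axis (4::4) (1::real) $ 4 = 1"
  by (simp_all add: axis_def)

lemma trace_RQQ:
  "(\<Sum>i\<in>UNIV. \<Sum>j\<in>UNIV. RQQ (a,b) $ i $ j * RQQ (c,d) $ i $ j) = 4 * (a \<bullet> c) * (b \<bullet> d)"
  unfolding RQQ_entry sum_4 inner4
  by (simp add: algebra_simps)

lemma RQQ_eq: "RQQ (a,b) = (\<chi> i j. qmult (qmult a (axis j 1)) b $ i)"
  by (simp add: RQQ_def matrix_def)
lemma qcomp_cont: "continuous_on S (\<lambda>p. qmult (qmult p (axis j 1)) p $ i)"
proof -
  have "i = 1 \<or> i = 2 \<or> i = 3 \<or> i = 4" using exhaust_4 by blast
  then show ?thesis by (elim disjE; simp only: qmult_comp; intro continuous_intros)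
qed
lemma cont_RQQ: "continuous_on S (\<lambda>p. RQQ (p,p))"
  unfolding RQQ_eq by (intro continuous_on_vec_lambda qcomp_cont)
lemma cont_det: "continuous_on S (\<lambda>p. RQQ (p,p)) \<Longrightarrow> continuous_on S (\<lambda>p. det (RQQ (p,p)))"
  unfolding det_def
  by (intro continuous_on_sum continuous_on_mult continuous_on_const continuous_on_prod continuous_on_component)
lemma orth_RQQ: assumes "norm a = 1" "norm b = 1"
  shows "orthogonal_matrix (RQQ (a,b))"
proof -
  have "orthogonal_transformation (\<lambda>x. qmult (qmult a x) b)"
    unfolding orthogonal_transformation using linear_qq assms by (simp add: norm_qmult)
  then show ?thesis unfolding RQQ_def orthogonal_transformation_matrix by simp
qed
lemma RQQ_11: "RQQ (e, e) = mat 1" if "e = (axis 1 1 :: real^4)"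
  unfolding RQQ_eq mat_def that by (simp add: vec_eq_iff forall_4)
lemma rot_RQQ: assumes "p \<in> S3" shows "RQQ (p,p) \<in> SO4"
proof -
  let ?e = "axis 1 1 :: real^4"
  let ?f = "\<lambda>p. det (RQQ (p,p))"
  have S3: "S3 = sphere 0 1" by (simp add: S3_def)
  have o: "orthogonal_matrix (RQQ (q,q))" if "q \<in> S3" for q
    using that orth_RQQ[of q q] by (simp add: S3_def)
  have c: "connected (?f ` S3)"
  proof (rule connected_continuous_image)
    show "continuous_on S3 ?f" by (rule cont_det[OF cont_RQQ])
    show "connected S3" unfolding S3 by (rule connected_sphere) simp
  qed
  have e: "?e \<in> S3" by (simp add: S3_def)
  have pm: "?f q = 1 \<or> ?f q = -1" if "q \<in> S3" for q
    using det_orthogonal_matrix[OF o[OF that]] .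
  show ?thesis
  proof (rule ccontr)
    assume "RQQ (p,p) \<notin> SO4"
    then have "?f p \<noteq> 1"
      using o[OF assms] unfolding SO4_def rotation_matrix_def by simp
    then have "?f p = -1" using pm[OF assms] by blast
    then have m: "-1 \<in> ?f ` S3" by (intro rev_image_eqI[OF assms]) simp
    have one: "1 \<in> ?f ` S3"
      using RQQ_11[of ?e] e by (intro rev_image_eqI[OF e]) simp
    have "(0::real) \<in> ?f ` S3"
      by (rule connectedD_interval[OF c m one]) auto
    then obtain q where "q \<in> S3" "?f q = 0" by auto
    then show False using pm by force
  qed
qed
lemma arc: "\<bar>x\<bar> \<le> 1 \<Longrightarrow> arccos x \<le> pi/2 \<longleftrightarrow> 0 \<le> x"
proof -
  assume h: "\<bar>x\<bar> \<le> 1"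
  show ?thesis
  proof (cases "0 \<le> x")
    case True
    then have "arccos x \<le> arccos 0" using h by (intro arccos_le_arccos) auto
    then show ?thesis using True by simp
  next
    case False
    then have "arccos 0 < arccos x" using h by (intro arccos_less_arccos) auto
    then show ?thesis using False by simp
  qed
qed

lemma d4q_ge: assumes "p \<in> S3 \<times> S3" "q \<in> S3 \<times> S3"
  and "(fst p \<bullet> fst q) * (snd p \<bullet> snd q) \<le> 0"
  shows "d4q p q \<ge> pi"
proof -
  define x where "x = fst p \<bullet> fst q"
  define y where "y = snd p \<bullet> snd q"
  have bx: "\<bar>x\<bar> \<le> 1" "\<bar>y\<bar> \<le> 1" using assms(1,2) unfolding x_def y_def S3_def
    by (auto intro!: order_trans[OF Cauchy_Schwarz_ineq2])
  define a where "a = arccos x"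
  define b where "b = arccos y"
  have ab: "0 \<le> a" "a \<le> pi" "0 \<le> b" "b \<le> pi" unfolding a_def b_def
    using bx by (auto intro: arccos_lbound arccos_ubound)
  have "(a \<le> pi/2 \<and> pi/2 \<le> b) \<or> (b \<le> pi/2 \<and> pi/2 \<le> a)"
  proof -
    have "(0 < x \<and> y \<le> 0) \<or> (x < 0 \<and> 0 \<le> y) \<or> x = 0"
      using assms(3) unfolding x_def[symmetric] y_def[symmetric]
      by (metis linorder_neqE_linordered_idom mult_le_0_iff not_le)
    moreover have "a \<le> pi/2 \<longleftrightarrow> 0 \<le> x" unfolding a_def using bx(1) arc
      by blast
    moreover have "b \<le> pi/2 \<longleftrightarrow> 0 \<le> y" unfolding b_def using bx(2) arc
      by blast
    moreover have "x = 0 \<Longrightarrow> a = pi/2" unfolding a_def by simp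
    moreover have "y = 0 \<Longrightarrow> b = pi/2" unfolding b_def by simp
    ultimately show ?thesis by (smt (verit))
  qed
  then have "min (a + b) (2*pi - a - b) + \<bar>a - b\<bar> \<ge> pi" using ab
    by (auto simp: min_def abs_if)
  then show ?thesis unfolding d4q_def Let_def dQ_def a_def b_def x_def y_def by simp
qed

lemma prod_RQQ: assumes "RQQ p' = RQQ p" shows
  "(fst p' \<bullet> fst q) * (snd p' \<bullet> snd q) = (fst p \<bullet> fst q) * (snd p \<bullet> snd q)"
  using trace_RQQ[of "fst p'" "snd p'" "fst q" "snd q"] trace_RQQ[of "fst p" "snd p" "fst q" "snd q"] assms
  by simp

lemma d4_ge: assumes "p \<in> S3 \<times> S3" "q \<in> S3 \<times> S3"
  and "(fst p \<bullet> fst q) * (snd p \<bullet> snd q) \<le> 0"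
  shows "d4 (RQQ p) (RQQ q) \<ge> pi"
proof -
  define p' where "p' = (SOME p'. p' \<in> S3 \<times> S3 \<and> RQQ p' = RQQ p)"
  define q' where "q' = (SOME q'. q' \<in> S3 \<times> S3 \<and> RQQ q' = RQQ q)"
  have p': "p' \<in> S3 \<times> S3 \<and> RQQ p' = RQQ p" unfolding p'_def
    by (rule someI[of _ p]) (use assms in auto)
  have q': "q' \<in> S3 \<times> S3 \<and> RQQ q' = RQQ q" unfolding q'_def
    by (rule someI[of _ q]) (use assms in auto)
  have "(fst p' \<bullet> fst q') * (snd p' \<bullet> snd q') = (fst p \<bullet> fst q') * (snd p \<bullet> snd q')"
    using prod_RQQ p' by blast
  also have "\<dots> = (fst q' \<bullet> fst p) * (snd q' \<bullet> snd p)" by (simp add: inner_commute)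
  also have "\<dots> = (fst q \<bullet> fst p) * (snd q \<bullet> snd p)" using prod_RQQ q' by blast
  finally have "(fst p' \<bullet> fst q') * (snd p' \<bullet> snd q') \<le> 0" using assms(3) by (simp add: inner_commute)
  then have "d4q p' q' \<ge> pi" using d4q_ge p' q' by blast
  then show ?thesis unfolding d4_def p'_def[symmetric] q'_def[symmetric] .
qed

lemma tsn: "topspace (nsphere n) = {x. (\<Sum>i\<le>n. x i ^ 2) = 1 \<and> (\<forall>i>n. x i = 0)}"
  unfolding nsphere topspace_subtopology by simp

lemma nsphere_eq: "nsphere n = subtopology (nsphere (Suc n)) {x. x (Suc n) = 0}"
  by (simp add: subtopology_nsphere_equator)

lemma restrict_sphere:
  assumes "continuous_map (nsphere (Suc n)) (nsphere (Suc n)) F"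
    and "\<And>u. u \<in> topspace (nsphere n) \<Longrightarrow> F u \<in> topspace (nsphere n)"
  shows "continuous_map (nsphere n) (nsphere n) F"
proof -
  have "continuous_map (subtopology (nsphere (Suc n)) {x. x (Suc n) = 0}) (nsphere (Suc n)) F"
    by (rule continuous_map_from_subtopology[OF assms(1)])
  then have c: "continuous_map (nsphere n) (nsphere (Suc n)) F"
    by (simp only: subtopology_nsphere_equator)
  have "F \<in> topspace (nsphere n) \<rightarrow> {x. x (Suc n) = 0}"
    using assms(2) by (auto simp: tsn)
  then have "continuous_map (nsphere n) (subtopology (nsphere (Suc n)) {x. x (Suc n) = 0}) F"
    using c by (simp add: continuous_map_in_subtopology)
  then show ?thesis by (simp only: subtopology_nsphere_equator)
qed

lemma sub_ns: "topspace (nsphere n) \<subseteq> topspace (nsphere (Suc n))"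
  by (auto simp: tsn)

lemma deg_contra:
  assumes cF: "continuous_map (nsphere 3) (nsphere 3) F"
    and odd: "\<And>u. u \<in> topspace (nsphere 3) \<Longrightarrow> F (\<lambda>i. - u i) = (\<lambda>i. - F u i)"
    and im2: "\<And>u. u \<in> topspace (nsphere 3) \<Longrightarrow> F u \<in> topspace (nsphere 2)"
    and im1: "\<And>u. u \<in> topspace (nsphere 1) \<Longrightarrow> F u \<in> topspace (nsphere 1)"
    and ns: "F ` topspace (nsphere 3) \<noteq> topspace (nsphere 3)"
  shows False
proof -
  have sub21: "topspace (nsphere 2) \<subseteq> topspace (nsphere 3)" "topspace (nsphere 1) \<subseteq> topspace (nsphere 2)"
    "topspace (nsphere 0) \<subseteq> topspace (nsphere 1)"
    using sub_ns[of 2] sub_ns[of 1] sub_ns[of 0] by (simp_all add: numeral_2_eq_2 numeral_3_eq_3)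
  have c2: "continuous_map (nsphere 2) (nsphere 2) F"
    using restrict_sphere[of 2 F] cF im2 sub21 by (auto simp: numeral_3_eq_3 numeral_2_eq_2)
  have c1: "continuous_map (nsphere 1) (nsphere 1) F"
    using restrict_sphere[of 1 F] c2 im1 by (auto simp: numeral_2_eq_2)
  have d3: "Brouwer_degree2 3 F = 0" using Brouwer_degree2_nonsurjective[OF cF ns] .
  have "even (Brouwer_degree2 3 F - Brouwer_degree2 (3 - Suc 0) F)"
    by (rule Borsuk_odd_mapping_degree_step[OF cF]) (use odd im2 sub21 in \<open>auto simp: o_def\<close>)
  then have e2: "even (Brouwer_degree2 2 F)" using d3 by (simp add: numeral_3_eq_3 numeral_2_eq_2)
  have "even (Brouwer_degree2 2 F - Brouwer_degree2 (2 - Suc 0) F)"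
    by (rule Borsuk_odd_mapping_degree_step[OF c2]) (use odd im1 sub21 in \<open>auto simp: o_def\<close>)
  then have e1: "even (Brouwer_degree2 1 F)" using e2 by (simp add: numeral_2_eq_2)
  define e0 :: "nat \<Rightarrow> real" where "e0 = (\<lambda>i. if i = 0 then 1 else 0)"
  have e0t: "e0 \<in> topspace (nsphere 1)" by (simp add: tsn e0_def)
  define a where "a = F e0 0"
  define b where "b = F e0 1"
  have Fe0: "F e0 \<in> topspace (nsphere 1)" using im1 e0t by blast
  then have ab: "a^2 + b^2 = 1" "\<And>i. i > 1 \<Longrightarrow> F e0 i = 0" by (auto simp: tsn a_def b_def numeral_2_eq_2)
  define \<rho> :: "(nat \<Rightarrow> real) \<Rightarrow> (nat \<Rightarrow> real)" where
    "\<rho> = (\<lambda>y i. if i = 0 then a * y 0 + b * y 1 else if i = 1 then a * y 1 - b * y 0 else y i)"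
  have \<rho>t: "\<rho> y \<in> topspace (nsphere 1)" if "y \<in> topspace (nsphere 1)" for y
  proof -
    have "(a * y 0 + b * y 1)^2 + (a * y 1 - b * y 0)^2 = (a^2+b^2) * (y 0 ^2 + y 1 ^2)"
      by (simp add: power2_eq_square algebra_simps)
    then show ?thesis using that ab by (simp add: tsn \<rho>_def)
  qed
  have c\<rho>: "continuous_map (nsphere 1) (nsphere 1) \<rho>"
  proof -
    have "continuous_map (nsphere 1) (powertop_real UNIV) \<rho>"
      unfolding continuous_map_componentwise_UNIV
    proof
      fix k
      show "continuous_map (nsphere 1) euclideanreal (\<lambda>x. \<rho> x k)"
        unfolding \<rho>_def
        by (cases "k = 0"; cases "k = 1") (simp_all add: continuous_map_nsphere_projection continuous_intros)
    qed
    then show ?thesis using \<rho>t by (subst (2) nsphere) (auto simp: continuous_map_in_subtopology tsn)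
  qed
  define H where "H = \<rho> \<circ> F"
  have cH: "continuous_map (nsphere 1) (nsphere 1) H"
    unfolding H_def using c1 c\<rho> by (rule continuous_map_compose)
  have "Brouwer_degree2 1 H = Brouwer_degree2 1 \<rho> * Brouwer_degree2 1 F"
    unfolding H_def by (rule Brouwer_degree2_compose[OF c1 c\<rho>])
  then have eH: "even (Brouwer_degree2 1 H)" using e1 by simp
  have He0: "H e0 = e0"
  proof
    fix i show "H e0 i = e0 i"
      using ab by (cases "i = 0"; cases "i = 1") (auto simp: H_def \<rho>_def e0_def a_def b_def power2_eq_square)
  qed
  have Hneg: "H (\<lambda>i. - u i) = (\<lambda>i. - H u i)" if "u \<in> topspace (nsphere 1)" for u
  proof -
    have "u \<in> topspace (nsphere 3)" using that sub21 by blast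
    then have "F (\<lambda>i. - u i) = (\<lambda>i. - F u i)" by (rule odd)
    then show ?thesis by (auto simp: H_def \<rho>_def algebra_simps)
  qed
  have t0: "u = e0 \<or> u = (\<lambda>i. - e0 i)" if "u \<in> topspace (nsphere 0)" for u
  proof -
    have "u 0 ^2 = 1" "\<And>i. i > 0 \<Longrightarrow> u i = 0" using that by (auto simp: tsn)
    then have "u 0 = 1 \<or> u 0 = -1" by (simp add: power2_eq_1_iff)
    then show ?thesis using \<open>\<And>i. i > 0 \<Longrightarrow> u i = 0\<close> unfolding e0_def by (auto simp: fun_eq_iff)
  qed
  have Hid: "H u = id u" if "u \<in> topspace (nsphere 0)" for u
    using t0[OF that] He0 Hneg[of e0] e0t by auto
  have "even (Brouwer_degree2 1 H - Brouwer_degree2 (1 - Suc 0) H)"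
  proof (rule Borsuk_odd_mapping_degree_step[OF cH])
    show "\<And>u. u \<in> topspace (nsphere 1) \<Longrightarrow> (H \<circ> (\<lambda>x i. - x i)) u = ((\<lambda>x i. - x i) \<circ> H) u"
      using Hneg by auto
    show "H \<in> topspace (nsphere (1 - Suc 0)) \<rightarrow> topspace (nsphere (1 - Suc 0))"
      using Hid by auto
  qed
  then have "even (Brouwer_degree2 0 H)" using eH by simp
  moreover have "Brouwer_degree2 0 H = 1"
    using Brouwer_degree2_eq[of 0 H id] Hid by simp
  ultimately show False by simp
qed

lemma ns_top: "nsphere n = top_of_set (topspace (nsphere n))"
  unfolding tsn unfolding nsphere euclidean_product_topology by simp

lemma norm3: "norm (x::real^3) = sqrt (x$1^2 + x$2^2 + x$3^2)"
  by (simp add: norm_eq_sqrt_inner inner_vec_def sum_3 power2_eq_square)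

definition to4 :: "(nat \<Rightarrow> real) \<Rightarrow> real^4" where
  "to4 u = (\<chi> i. if i = 1 then u 0 else if i = 2 then u 1 else if i = 3 then u 2 else u 3)"

definition emb :: "real^3 \<Rightarrow> (nat \<Rightarrow> real)" where
  "emb w = (\<lambda>i. if i = 0 then w$1 else if i = 1 then w$2 else if i = 2 then w$3 else 0)"

lemma to4_comp [simp]: "to4 u $ 1 = u 0" "to4 u $ 2 = u 1" "to4 u $ 3 = u 2" "to4 u $ 4 = u 3"
  by (simp_all add: to4_def)

lemma sum3: "(\<Sum>i\<le>(3::nat). f i) = f 0 + f 1 + f 2 + (f 3 :: real)"
  by (simp add: numeral_3_eq_3 numeral_2_eq_2)
lemma sum2: "(\<Sum>i\<le>(2::nat). f i) = f 0 + f 1 + (f 2 :: real)"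
  by (simp add: numeral_2_eq_2)

lemma to4_sphere: "u \<in> topspace (nsphere 3) \<Longrightarrow> to4 u \<in> sphere 0 1"
  by (simp add: tsn sum3 norm4)

lemma to4_neg: "to4 (\<lambda>i. - u i) = - to4 u"
  by (simp add: vec_eq_iff forall_4)

lemma emb_sphere: "norm w = 1 \<Longrightarrow> emb w \<in> topspace (nsphere 2)"
  by (simp add: tsn sum2 norm3 emb_def)

lemma emb_neg: "emb (- w) = (\<lambda>i. - emb w i)"
  by (simp add: emb_def fun_eq_iff)

lemma cont_to4: "continuous_on S to4"
  unfolding to4_def
proof (intro continuous_on_vec_lambda)
  fix i :: 4
  have c: "continuous_on S (\<lambda>u::nat\<Rightarrow>real. u k)" for k
    by (rule continuous_on_subset[OF continuous_on_product_coordinates]) simp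
  show "continuous_on S (\<lambda>x. if i = 1 then x 0 else if i = 2 then x 1 else if i = 3 then x 2 else x 3)"
    by (cases "i = 1"; cases "i = 2"; cases "i = 3") (simp_all add: c)
qed

lemma less_numeral_extra_3: "(2::nat) < 3" by simp

lemma cm_ns:
  assumes "continuous_on (topspace (nsphere n)) F" "F \<in> topspace (nsphere n) \<rightarrow> topspace (nsphere m)"
  shows "continuous_map (nsphere n) (nsphere m) F"
proof -
  have "continuous_map (top_of_set (topspace (nsphere n))) (top_of_set (topspace (nsphere m))) F"
    using assms by simp
  then show ?thesis by (simp only: ns_top[symmetric])
qed

lemma sphere_contra:
  fixes \<Psi> :: "real^4 \<Rightarrow> real^3"
  assumes cont: "continuous_on (sphere 0 1) \<Psi>"
    and unit: "\<And>x. x \<in> sphere 0 1 \<Longrightarrow> norm (\<Psi> x) = 1"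
    and odd: "\<And>x. x \<in> sphere 0 1 \<Longrightarrow> \<Psi> (-x) = - \<Psi> x"
    and eq: "\<And>x. x \<in> sphere 0 1 \<Longrightarrow> x$3 = 0 \<Longrightarrow> x$4 = 0 \<Longrightarrow> \<Psi> x $ 3 = 0"
  shows False
proof -
  define F where "F = (\<lambda>u. emb (\<Psi> (to4 u)))"
  let ?T = "topspace (nsphere 3)"
  have im2: "F u \<in> topspace (nsphere 2)" if "u \<in> ?T" for u
    unfolding F_def using emb_sphere unit to4_sphere that by blast
  have sub: "topspace (nsphere 2) \<subseteq> ?T" using sub_ns[of 2] by simp
  have cF: "continuous_map (nsphere 3) (nsphere 3) F"
  proof -
    have "continuous_on ?T (\<lambda>u. \<Psi> (to4 u))"
      by (rule continuous_on_compose2[OF cont cont_to4]) (use to4_sphere in blast)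
    then have "continuous_on ?T F"
      unfolding F_def emb_def
    proof (intro continuous_on_coordinatewise_then_product)
      fix i :: nat
      assume c: "continuous_on ?T (\<lambda>u. \<Psi> (to4 u))"
      show "continuous_on ?T (\<lambda>x. if i = 0 then \<Psi> (to4 x) $ 1 else if i = 1 then \<Psi> (to4 x) $ 2
               else if i = 2 then \<Psi> (to4 x) $ 3 else 0)"
        by (cases "i = 0"; cases "i = 1"; cases "i = 2") (simp_all add: continuous_on_component[OF c])
    qed
    then show ?thesis using im2 sub by (intro cm_ns) auto
  qed
  show False
  proof (rule deg_contra[OF cF])
    show "F (\<lambda>i. - u i) = (\<lambda>i. - F u i)" if "u \<in> ?T" for u
    proof -
      have "\<Psi> (to4 (\<lambda>i. - u i)) = - \<Psi> (to4 u)"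
        unfolding to4_neg by (rule odd[OF to4_sphere[OF that]])
      then show ?thesis unfolding F_def by (simp only: emb_neg)
    qed
    show "F u \<in> topspace (nsphere 2)" if "u \<in> ?T" for u using im2 that .
    show "F u \<in> topspace (nsphere 1)" if u: "u \<in> topspace (nsphere 1)" for u
    proof -
      have s1: "topspace (nsphere 1) \<subseteq> topspace (nsphere 2)"
        using sub_ns[of 1] by (simp add: numeral_2_eq_2)
      have uT: "u \<in> ?T" using u s1 sub by blast
      have u1: "\<forall>i>1. u i = 0" using u unfolding tsn by blast
      have "u 2 = 0" "u 3 = 0" using u1 by auto
      then have "\<Psi> (to4 u) $ 3 = 0" using eq[OF to4_sphere[OF uT]] by simp
      then have F2: "F u 2 = 0" by (simp add: F_def emb_def)
      have "F u \<in> topspace (nsphere 2)" using im2 uT by blast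
      then have h: "F u 0 ^2 + F u 1 ^ 2 + F u 2 ^ 2 = 1" "\<forall>i>2. F u i = 0"
        unfolding tsn sum2 by blast+
      have "\<forall>i>1. F u i = 0"
      proof (intro allI impI)
        fix i :: nat assume "1 < i"
        then have "i = 2 \<or> i > 2" by auto
        then show "F u i = 0" using h F2 by auto
      qed
      then show ?thesis using h(1) F2 by (simp add: tsn)
    qed
    have e3: "(\<lambda>i. if i = 3 then 1 else 0 :: real) \<in> ?T" unfolding tsn sum3 by simp
    moreover have "(\<lambda>i. if i = 3 then 1 else 0 :: real) \<notin> F ` ?T"
    proof
      assume "(\<lambda>i. if i = 3 then 1 else 0 :: real) \<in> F ` ?T"
      then obtain u where u: "u \<in> ?T" "F u = (\<lambda>i. if i = 3 then 1 else 0 :: real)" by (rule imageE) (rule that, auto)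
      have "F u \<in> topspace (nsphere 2)" using im2[OF u(1)] .
      then have "\<forall>i>2. F u i = 0" unfolding tsn by blast
      then have "F u 3 = 0" by (metis less_numeral_extra_3)
      then show False using u(2) by (metis zero_neq_one)
    qed
    ultimately show "F ` ?T \<noteq> ?T" by blast
  qed
qed

lemma gamma_comp [simp]:
  "(cos t *\<^sub>R axis 1 1 + sin t *\<^sub>R axis 2 1 :: real^4) $ 1 = cos t"
  "(cos t *\<^sub>R axis 1 1 + sin t *\<^sub>R axis 2 1 :: real^4) $ 2 = sin t"
  "(cos t *\<^sub>R axis 1 1 + sin t *\<^sub>R axis 2 1 :: real^4) $ 3 = 0"
  "(cos t *\<^sub>R axis 1 1 + sin t *\<^sub>R axis 2 1 :: real^4) $ 4 = 0"
  by (simp_all add: axis_def)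

lemma circle_param:
  fixes x :: "real^4"
  assumes "norm x = 1" "x$3 = 0" "x$4 = 0"
  obtains t where "x = cos t *\<^sub>R axis 1 1 + sin t *\<^sub>R axis 2 1"
proof -
  have "(x$1)^2 + (x$2)^2 = 1" using assms by (simp add: norm4)
  then obtain t where "x$1 = cos t" "x$2 = sin t" using sincos_total_2pi by metis
  then have "x = cos t *\<^sub>R axis 1 1 + sin t *\<^sub>R axis 2 1"
    using assms by (simp add: vec_eq_iff forall_4)
  then show ?thesis using that by blast
qed

lemma cone_diff:
  fixes P :: "real^4 \<Rightarrow> real^3"
  assumes "polynomial_function P"
  shows "(\<lambda>z::real\<times>real. fst z *\<^sub>R P (cos (snd z) *\<^sub>R axis 1 1 + sin (snd z) *\<^sub>R axis 2 1)) differentiable_on UNIV"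
proof -
  have dc: "(\<lambda>z::real\<times>real. cos (snd z)) differentiable (at z)" for z
    by (rule differentiable_compose[of cos, OF _ bounded_linear_imp_differentiable[OF bounded_linear_snd]])
       (auto simp: real_differentiable_def intro: DERIV_cos)
  have ds: "(\<lambda>z::real\<times>real. sin (snd z)) differentiable (at z)" for z
    by (rule differentiable_compose[of sin, OF _ bounded_linear_imp_differentiable[OF bounded_linear_snd]])
       (auto simp: real_differentiable_def intro: DERIV_sin)
  have dg: "(\<lambda>z::real\<times>real. cos (snd z) *\<^sub>R axis 1 1 + sin (snd z) *\<^sub>R axis 2 1 :: real^4) differentiable (at z)" for z
    using dc ds by (intro differentiable_add differentiable_scaleR differentiable_const)
  have dP: "P differentiable (at y)" for y
    using differentiable_at_polynomial_function[OF assms] by blast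
  show ?thesis unfolding differentiable_on_def
  proof
    fix z :: "real \<times> real"
    show "(\<lambda>z::real\<times>real. fst z *\<^sub>R P (cos (snd z) *\<^sub>R axis 1 1 + sin (snd z) *\<^sub>R axis 2 1)) differentiable (at z within UNIV)"
      using differentiable_compose[OF dP dg] bounded_linear_imp_differentiable[OF bounded_linear_fst]
      by (intro differentiable_scaleR) auto
  qed
qed


lemma BU3:
  fixes g :: "real^4 \<Rightarrow> real^3"
  assumes cg: "continuous_on (sphere 0 1) g" and og: "\<forall>x\<in>sphere 0 1. g (-x) = - g x"
  shows "\<exists>x\<in>sphere 0 1. g x = 0"
proof (rule ccontr)
  define S where "S = sphere (0::real^4) 1"
  assume "\<not> (\<exists>x\<in>sphere 0 1. g x = 0)"
  then have nz: "\<And>x. x \<in> S \<Longrightarrow> g x \<noteq> 0" unfolding S_def by blast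
  have negS: "-x \<in> S" if "x \<in> S" for x using that by (simp add: S_def)
  have Sne: "S \<noteq> {}" unfolding S_def by (simp add: sphere_def) (metis norm_axis_1 norm_minus_cancel)
  obtain x0 where x0: "x0 \<in> S" "\<And>y. y \<in> S \<Longrightarrow> norm (g x0) \<le> norm (g y)"
    using continuous_attains_inf[OF _ Sne continuous_on_norm[OF cg[folded S_def]]] compact_sphere
    unfolding S_def by blast
  define m where "m = norm (g x0)"
  have m0: "m > 0" using nz[OF x0(1)] by (simp add: m_def)
  obtain q where pq: "polynomial_function q" and qa: "\<And>x. x \<in> S \<Longrightarrow> norm (g x - q x) < m"
    using Stone_Weierstrass_polynomial_function[OF compact_sphere cg m0] unfolding S_def by blast
  define P where "P = (\<lambda>x. (1/2) *\<^sub>R (q x - q (-x)))"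
  have pP: "polynomial_function P"
  proof -
    have "polynomial_function (q \<circ> uminus)"
      by (rule polynomial_function_compose[OF polynomial_function_minus[OF polynomial_function_id] pq])
    then have "polynomial_function (\<lambda>x. q (-x))" by (simp add: o_def)
    then show ?thesis unfolding P_def using pq by (intro polynomial_function_cmul polynomial_function_diff)
  qed
  have cP: "continuous_on T P" for T by (rule differentiable_imp_continuous_on[OF differentiable_on_polynomial_function[OF pP]])
  have Podd: "P (-x) = - P x" for x by (simp add: P_def algebra_simps)
  have Pnz: "P x \<noteq> 0" if "x \<in> S" for x
  proof
    assume "P x = 0"
    have "g (-x) = - g x" using og that by (simp add: S_def)
    have h2: "(1/2::real) *\<^sub>R (g x + g x) = g x" by (simp add: scaleR_2[symmetric])
    have "(1/2) *\<^sub>R ((q x - g x) - (q (-x) - g (-x))) = (1/2) *\<^sub>R ((q x - q (-x)) - (g x + g x))"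
      using \<open>g (-x) = - g x\<close> by (simp add: algebra_simps)
    also have "\<dots> = P x - g x" unfolding P_def scaleR_diff_right h2 ..
    finally have "P x - g x = (1/2) *\<^sub>R ((q x - g x) - (q (-x) - g (-x)))" ..
    then have "norm (P x - g x) = (1/2) * norm ((q x - g x) - (q (-x) - g (-x)))" by simp
    also have "\<dots> \<le> (1/2) * (norm (q x - g x) + norm (q (-x) - g (-x)))"
      using norm_triangle_ineq4[of "q x - g x" "q (-x) - g (-x)"] by simp
    also have "\<dots> = (1/2) * (norm (g x - q x) + norm (g (-x) - q (-x)))"
      by (simp add: norm_minus_commute)
    also have "\<dots> < m" using qa[OF that] qa[OF negS[OF that]] by simp
    finally have "norm (g x) < m" using \<open>P x = 0\<close> by simp
    then show False using x0(2)[OF that] m_def by simp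
  qed
  define \<gamma> :: "real \<Rightarrow> real^4" where "\<gamma> = (\<lambda>t. cos t *\<^sub>R axis 1 1 + sin t *\<^sub>R axis 2 1)"
  define \<Phi> where "\<Phi> = (\<lambda>z::real\<times>real. fst z *\<^sub>R P (cos (snd z) *\<^sub>R axis 1 1 + sin (snd z) *\<^sub>R axis 2 1))"
  have "negligible (range \<Phi>)"
    unfolding \<Phi>_def by (rule negligible_differentiable_image_lowdim[OF _ cone_diff[OF pP]]) simp
  then have "range \<Phi> \<noteq> UNIV" by auto
  then obtain z where z: "z \<notin> range \<Phi>" by blast
  have "\<Phi> (0,0) = 0" by (simp add: \<Phi>_def)
  then have z0: "z \<noteq> 0" using z by (metis rangeI)
  define v where "v = z /\<^sub>R norm z"
  have nv: "norm v = 1" using z0 by (simp add: v_def)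
  define N :: "real^3 \<Rightarrow> real^3" where "N = (\<lambda>w. w /\<^sub>R norm w)"
  define D where "D = S \<inter> {x. x$3 = 0 \<and> x$4 = 0}"
  define K where "K = (\<lambda>x. N (P x)) ` D"
  have DS: "D \<subseteq> S" by (auto simp: D_def)
  have cNP: "continuous_on S (\<lambda>x. N (P x))"
    unfolding N_def using Pnz by (intro continuous_intros cP) auto
  have cD: "compact D"
  proof -
    have "closed {x::real^4. x$3 = 0 \<and> x$4 = 0}"
      by (intro closed_Collect_conj closed_Collect_eq continuous_on_component continuous_on_id continuous_on_const)
    then show ?thesis unfolding D_def S_def by (intro compact_Int_closed compact_sphere)
  qed
  have cK: "compact K" unfolding K_def
    by (rule compact_continuous_image[OF continuous_on_subset[OF cNP DS] cD])
  have "axis 1 1 \<in> D" by (simp add: D_def S_def norm4 axis_def)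
  then have Kne: "K \<noteq> {}" by (auto simp: K_def)
  have vK: "v \<notin> K \<and> -v \<notin> K"
  proof -
    have False if sK: "s *\<^sub>R v \<in> K" and s: "s * s = 1" for s :: real
    proof -
      obtain x where x: "x \<in> D" "s *\<^sub>R v = N (P x)" using sK unfolding K_def by (rule imageE) (rule that, auto)
      then have "norm x = 1" "x$3 = 0" "x$4 = 0" unfolding D_def S_def by simp_all
      then obtain t where t: "x = cos t *\<^sub>R axis 1 1 + sin t *\<^sub>R axis 2 1" by (rule circle_param)
      define y where "y = P x"
      have "x \<in> S" using x(1) DS by blast
      then have y0: "y \<noteq> 0" unfolding y_def by (rule Pnz)
      have "z = norm z *\<^sub>R v" using z0 by (simp add: v_def)
      also have "\<dots> = (norm z * (s * s)) *\<^sub>R v" using s by simp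
      also have "\<dots> = (norm z * s) *\<^sub>R (s *\<^sub>R v)" by (simp add: mult.assoc)
      also have "\<dots> = (norm z * s) *\<^sub>R (y /\<^sub>R norm y)" unfolding x(2) N_def y_def ..
      also have "\<dots> = (norm z * s / norm y) *\<^sub>R y" by (simp add: divide_inverse mult.assoc)
      also have "\<dots> = \<Phi> (norm z * s / norm y, t)" unfolding \<Phi>_def y_def t by simp
      finally have "z = \<Phi> (norm z * s / norm y, t)" .
      then show False using z by (metis rangeI)
    qed
    then show ?thesis by (metis mult_1 scaleR_one scaleR_minus1_left mult_minus_right mult_minus_left minus_minus)
  qed
  have nva: "norm v = norm (axis 3 (1::real) :: real^3)" using nv by (simp add: norm3 axis_def)
  obtain Q :: "real^3 \<Rightarrow> real^3" where Q: "orthogonal_transformation Q" "Q v = axis (3::3) 1"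
    using orthogonal_transformation_exists[OF nva] by metis
  have lQ: "linear Q" using Q(1) by (simp add: orthogonal_transformation_linear)
  have Qneg: "Q (-y) = - Q y" for y using linear_neg[OF lQ] .
  have nQ: "norm (Q y) = norm y" for y using Q(1) by (simp add: orthogonal_transformation_norm)
  have cQ: "continuous_on T Q" for T
    by (rule linear_continuous_on[OF linear_conv_bounded_linear[THEN iffD1, OF lQ]])
  have clK: "closed K" using cK by (rule compact_imp_closed)
  define dd where "dd = (\<lambda>y. infdist y K * infdist (-y) K)"
  define A where "A = (\<lambda>y. (\<chi> i. if i = 3 then Q y $ 3 * dd y else Q y $ i) :: real^3)"
  have A3: "A y $ 3 = Q y $ 3 * dd y" for y by (simp add: A_def)
  have A12: "A y $ 1 = Q y $ 1" "A y $ 2 = Q y $ 2" for y by (simp_all add: A_def)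
  have cA: "continuous_on T A" for T
    unfolding A_def dd_def
  proof (intro continuous_on_vec_lambda)
    fix i :: 3
    show "continuous_on T (\<lambda>x. if i = 3 then Q x $ 3 * (infdist x K * infdist (- x) K) else Q x $ i)"
      by (cases "i = 3") (simp_all add: continuous_on_component[OF cQ] continuous_intros)
  qed
  have Aodd: "A (-y) = - A y" for y
    by (simp add: A_def dd_def Qneg vec_eq_iff mult.commute)
  have Anz: "A y \<noteq> 0" if ny: "norm y = 1" for y
  proof
    assume A0: "A y = 0"
    have q12: "Q y $ 1 = 0" "Q y $ 2 = 0" using A0 A12[of y] by simp_all
    have "norm (Q y) = 1" using nQ[of y] ny by simp
    then have "(Q y $ 1)^2 + (Q y $ 2)^2 + (Q y $ 3)^2 = 1" unfolding norm3 by simp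
    then have "(Q y $ 3)^2 = 1" using q12 by simp
    then have q3: "Q y $ 3 = 1 \<or> Q y $ 3 = -1" by (simp add: power2_eq_1_iff)
    then have "dd y = 0" using A0 A3[of y] by auto
    then have "infdist y K = 0 \<or> infdist (-y) K = 0" unfolding dd_def by simp
    then have yK: "y \<in> K \<or> -y \<in> K"
      using in_closed_iff_infdist_zero[OF clK Kne, of y] in_closed_iff_infdist_zero[OF clK Kne, of "-y"] by blast
    have ax: "axis (3::3) (1::real) $ 1 = 0" "axis (3::3) (1::real) $ 2 = 0" "axis (3::3) (1::real) $ 3 = 1"
      by (simp_all add: axis_def)
    have "Q y = Q v \<or> Q y = Q (-v)"
      using q3
    proof
      assume "Q y $ 3 = 1" then have "Q y = Q v" using q12 ax by (simp add: Q(2) vec_eq_iff forall_3)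
      then show ?thesis ..
    next
      assume "Q y $ 3 = -1" then have "Q y = Q (-v)" using q12 ax by (simp add: Qneg Q(2) vec_eq_iff forall_3)
      then show ?thesis ..
    qed
    then have "y = v \<or> y = -v" using orthogonal_transformation_inj[OF Q(1)] unfolding inj_def by blast
    then show False using yK vK by auto
  qed
  have nN: "norm (N w) = 1" if "w \<noteq> 0" for w using that by (simp add: N_def)
  have Nneg: "N (-w) = - N w" for w by (simp add: N_def)
  define \<Psi> where "\<Psi> = (\<lambda>x. N (A (N (P x))))"
  show False
  proof (rule sphere_contra[of \<Psi>])
    have c1: "continuous_on S (\<lambda>x. A (N (P x)))"
      by (rule continuous_on_compose2[OF cA[of UNIV] cNP]) simp
    show "continuous_on (sphere 0 1) \<Psi>"
      unfolding \<Psi>_def S_def[symmetric] N_def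
      using c1 Pnz Anz nN unfolding N_def
      by (intro continuous_intros) auto
    show "norm (\<Psi> x) = 1" if "x \<in> sphere 0 1" for x
      using that Pnz Anz nN unfolding \<Psi>_def S_def by metis
    show "\<Psi> (-x) = - \<Psi> x" if "x \<in> sphere 0 1" for x
      unfolding \<Psi>_def Podd Nneg Aodd ..
    show "\<Psi> x $ 3 = 0" if "x \<in> sphere 0 1" "x$3 = 0" "x$4 = 0" for x
    proof -
      have "x \<in> D" using that by (simp add: D_def S_def)
      then have "N (P x) \<in> K" unfolding K_def by (rule imageI)
      then have "dd (N (P x)) = 0" by (simp add: dd_def)
      then have "A (N (P x)) $ 3 = 0" by (simp add: A3)
      then show ?thesis by (simp add: \<Psi>_def N_def)
    qed
  qed
qed

lemma RQQ_neg: "RQQ (-p,-p) = RQQ (p,p)"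
proof -
  have "qmult (qmult (-p) x) (-p) = qmult (qmult p x) p" for x
    by (simp add: vec_eq_iff forall_4 algebra_simps)
  then show ?thesis unfolding RQQ_def by simp
qed

lemma cont_comp_f:
  assumes "continuous_on SO4 f"
  shows "continuous_on S3 (\<lambda>p. f (RQQ (p,p)))"
  using continuous_on_compose2[OF assms cont_RQQ[of S3]] rot_RQQ by blast

theorem theorem12:
  fixes f1 f2 f3 :: "real^4^4 \<Rightarrow> (real^4) \<times> (real^4)"
  assumes "continuous_on SO4 f1" and "f1 ` SO4 \<subseteq> S3 \<times> S3"
    and "continuous_on SO4 f2" and "f2 ` SO4 \<subseteq> S3 \<times> S3"
    and "continuous_on SO4 f3" and "f3 ` SO4 \<subseteq> S3 \<times> S3"
  shows "\<exists>R\<in>SO4. d4 R (RQQ (f1 R)) \<ge> pi \<and> d4 R (RQQ (f2 R)) \<ge> pi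
                  \<and> d4 R (RQQ (f3 R)) \<ge> pi"
proof -
  define h where "h = (\<lambda>(f::real^4^4 \<Rightarrow> (real^4) \<times> (real^4)) p. p \<bullet> fst (f (RQQ (p,p))))"
  define G where "G = (\<lambda>p. (\<chi> i::3. if i = 1 then h f1 p else if i = 2 then h f2 p else h f3 p))"
  have S3: "S3 = sphere 0 1" by (simp add: S3_def)
  have ch: "continuous_on S3 (h f)" if "continuous_on SO4 f" for f
    unfolding h_def by (intro continuous_intros cont_comp_f that)
  have "continuous_on S3 G" unfolding G_def
  proof (intro continuous_on_vec_lambda)
    fix i :: 3
    show "continuous_on S3 (\<lambda>x. if i = 1 then h f1 x else if i = 2 then h f2 x else h f3 x)"
      by (cases "i = 1"; cases "i = 2") (simp_all add: ch assms)
  qed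
  moreover have "\<forall>x\<in>sphere 0 1. G (-x) = - G x"
    by (simp add: G_def h_def RQQ_neg vec_eq_iff)
  ultimately obtain p where p: "p \<in> S3" "G p = 0" using BU3 S3 by metis
  have "G p $ 1 = 0" "G p $ 2 = 0" "G p $ 3 = 0" using p(2) by simp_all
  then have hz: "h f1 p = 0" "h f2 p = 0" "h f3 p = 0" unfolding G_def by simp_all
  have R: "RQQ (p,p) \<in> SO4" using rot_RQQ p(1) .
  have key: "d4 (RQQ (p,p)) (RQQ (f (RQQ (p,p)))) \<ge> pi"
    if "f ` SO4 \<subseteq> S3 \<times> S3" "h f p = 0" for f
    apply (rule d4_ge)
    using that p(1) R by (auto simp: h_def)
  show ?thesis using key hz assms R by blast
qed

end
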